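(* Fix an $(M,n)$ symmetric code with power constraint $P$ for the Gaussian many-access channel with $\ell_n$ users and activity probability $\alpha_n$, and let $k_n=\alpha_n\ell_n$. Let $\mathbf X=(\mathbf X_1^T,\dots,\mathbf X_{\ell_n}^T)^T\in\{0,1\}^{M\ell_n}$, where $\mathbf X_k=\mathbf 0$ if $W_k=0$ and $\mathbf X_k=\mathbf e_m$ (the $m$-th standard basis vector of $\mathbb R^M$) if $W_k=m\in\{1,\dots,M\}$, and let $\mathbf Y$ be the channel output. Then $I(\mathbf X;\mathbf Y)\le\frac n2\log(1+k_nP)$.
   Context: Logarithms are natural. Channel: $\mathbf Y=\sum_{k=1}^{\ell_n}\mathbf s_k(W_k)+\mathbf Z\in\mathbb R^n$, $\mathbf Z$ i.i.d. standard Gaussian independent of messages. An $(M,n)$ symmetric code with power constraint $P$: encoders $\mathbf s_k:\{0,\dots,M\}\to\mathbb R^n$ with $\mathbf s_k(0)=\mathbf 0$ and $\frac1n\sum_{i=1}^ns_{ki}(w)^2\le P$ for all $w$, and a decoder. Messages $W_1,\dots,W_{\ell_n}$ are independent with $\mathsf P\{W_k=0\}=1-\alpha_n$ and $\mathsf P\{W_k=w\}=\alpha_n/M$ for $1\le w\le M$. *)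

theory Defs
  imports "HOL-Probability.Probability"
begin

definition msg_pmf :: "real \<Rightarrow> nat \<Rightarrow> nat pmf" where
  "msg_pmf \<alpha> M = bind_pmf (bernoulli_pmf \<alpha>)
     (\<lambda>b. if b then pmf_of_set {1..M} else return_pmf 0)"

definition mac_space :: "real \<Rightarrow> nat \<Rightarrow> nat \<Rightarrow> nat \<Rightarrow> ((nat \<Rightarrow> nat) \<times> (nat \<Rightarrow> real)) measure" where
  "mac_space \<alpha> M l n =
     (PiM {..<l} (\<lambda>_. measure_pmf (msg_pmf \<alpha> M))) \<Otimes>\<^sub>M
     (PiM {..<n} (\<lambda>_. density lborel std_normal_density))"

text \<open>One-hot vector X in {0,1}^(M l): coordinate k*M + (m-1) (0-based k) is 1 iff W_k = m.\<close>
definition mac_X :: "nat \<Rightarrow> nat \<Rightarrow> (nat \<Rightarrow> nat) \<times> (nat \<Rightarrow> real) \<Rightarrow> nat \<Rightarrow> real" where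
  "mac_X M l \<omega> = (\<lambda>j\<in>{..<l*M}. if fst \<omega> (j div M) = j mod M + 1 then 1 else 0)"

definition mac_Y :: "(nat \<Rightarrow> nat \<Rightarrow> nat \<Rightarrow> real) \<Rightarrow> nat \<Rightarrow> nat \<Rightarrow> (nat \<Rightarrow> nat) \<times> (nat \<Rightarrow> real) \<Rightarrow> nat \<Rightarrow> real" where
  "mac_Y s l n \<omega> = (\<lambda>i\<in>{..<n}. (\<Sum>k<l. s k (fst \<omega> k) i) + snd \<omega> i)"

end

theory Submission
  imports Defs
begin

lemma sf_normal: "sigma_finite_measure (density lborel (normal_density m 1))"
  using prob_space_imp_sigma_finite[OF prob_space_normal_density[of 1 m]] by simp

lemma PiM_normal_density:
  fixes m :: "'i \<Rightarrow> real" and I :: "'i set"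
  assumes fin: "finite I"
  shows "PiM I (\<lambda>i. density lborel (normal_density (m i) 1)) =
         density (PiM I (\<lambda>_. lborel)) (\<lambda>y. \<Prod>i\<in>I. normal_density (m i) 1 (y i))"
proof -
  interpret N: product_sigma_finite "\<lambda>i. density lborel (normal_density (m i) 1)"
    using sf_normal by (rule product_sigma_finite.intro)
  interpret L: product_sigma_finite "\<lambda>_::'i. lborel" by standard
  show ?thesis
  proof (rule N.PiM_eqI[symmetric, OF fin])
    show "sets (density (PiM I (\<lambda>_. lborel)) (\<lambda>y. \<Prod>i\<in>I. normal_density (m i) 1 (y i))) =
          sets (PiM I (\<lambda>i. density lborel (normal_density (m i) 1)))"
      unfolding sets_density by (intro sets_PiM_cong) simp_all
  next
    fix A assume A: "\<And>i. i \<in> I \<Longrightarrow> A i \<in> sets (density lborel (normal_density (m i) 1))"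
    then have A': "\<And>i. i \<in> I \<Longrightarrow> A i \<in> sets lborel" by simp
    have "PiE I A \<in> sets (PiM I (\<lambda>_. lborel))"
      using A' by (intro sets_PiM_I_finite fin) auto
    then have "emeasure (density (PiM I (\<lambda>_. lborel)) (\<lambda>y. \<Prod>i\<in>I. normal_density (m i) 1 (y i))) (PiE I A)
       = (\<integral>\<^sup>+ y. ennreal (\<Prod>i\<in>I. normal_density (m i) 1 (y i)) * indicator (PiE I A) y \<partial>PiM I (\<lambda>_. lborel))"
      by (subst emeasure_density) auto
    also have "\<dots> = (\<integral>\<^sup>+ y. (\<Prod>i\<in>I. ennreal (normal_density (m i) 1 (y i)) * indicator (A i) (y i)) \<partial>PiM I (\<lambda>_. lborel))"
    proof (rule nn_integral_cong)
      fix y :: "'i \<Rightarrow> real" assume y: "y \<in> space (PiM I (\<lambda>_. lborel))"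
      have "indicator (PiE I A) y = (\<Prod>i\<in>I. indicator (A i) (y i) :: ennreal)"
        using y fin by (auto simp: space_PiM indicator_def PiE_iff)
      then show "ennreal (\<Prod>i\<in>I. normal_density (m i) 1 (y i)) * indicator (PiE I A) y =
         (\<Prod>i\<in>I. ennreal (normal_density (m i) 1 (y i)) * indicator (A i) (y i))"
        by (simp add: prod.distrib prod_ennreal)
    qed
    also have "\<dots> = (\<Prod>i\<in>I. \<integral>\<^sup>+ t. ennreal (normal_density (m i) 1 t) * indicator (A i) t \<partial>lborel)"
      using A' by (intro L.product_nn_integral_prod fin) auto
    also have "\<dots> = (\<Prod>i\<in>I. emeasure (density lborel (normal_density (m i) 1)) (A i))"
      using A' by (intro prod.cong refl) (simp add: emeasure_density)
    finally show "emeasure (density (PiM I (\<lambda>_. lborel)) (\<lambda>y. \<Prod>i\<in>I. normal_density (m i) 1 (y i))) (PiE I A)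
        = (\<Prod>i\<in>I. emeasure (density lborel (normal_density (m i) 1)) (A i))" .
  qed
qed

lemma distr_std_normal_shift:
  "distr (density lborel std_normal_density) lborel (\<lambda>t. c + t) = density lborel (normal_density c 1)"
proof -
  interpret p: prob_space "density lborel std_normal_density" by (rule prob_space_normal_density) simp
  have "distributed (density lborel std_normal_density) lborel (\<lambda>x. x) std_normal_density"
    by (auto simp: distributed_def distr_id2 intro!: measurable_ident_sets)
  from p.normal_density_affine[OF this, of 1 c] show ?thesis
    by (simp add: distributed_def)
qed

definition Bz :: "nat \<Rightarrow> (nat \<Rightarrow> real) measure" where
  "Bz n = PiM {..<n} (\<lambda>_. density lborel std_normal_density)"
definition Lam :: "nat \<Rightarrow> (nat \<Rightarrow> real) measure" where
  "Lam n = PiM {..<n} (\<lambda>_. lborel)"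
definition phi :: "nat \<Rightarrow> (nat \<Rightarrow> real) \<Rightarrow> (nat \<Rightarrow> real) \<Rightarrow> real" where
  "phi n m y = (\<Prod>i<n. normal_density (m i) 1 (y i))"

lemma sets_Bz[simp, measurable_cong]: "sets (Bz n) = sets (Lam n)"
  unfolding Bz_def Lam_def by (intro sets_PiM_cong) simp_all

lemma space_Bz[simp]: "space (Bz n) = space (Lam n)"
  using sets_eq_imp_space_eq[OF sets_Bz] .

lemma prob_space_Bz: "prob_space (Bz n)"
  unfolding Bz_def
  by (intro prob_space_PiM prob_space_normal_density) simp

lemma measurable_shift[measurable]:
  "(\<lambda>z. \<lambda>i\<in>{..<n}. \<mu> i + z i) \<in> Lam n \<rightarrow>\<^sub>M Lam n"
  unfolding Lam_def by measurable

lemma pre_borel: "A \<in> sets borel \<Longrightarrow> (\<lambda>t::real. c + t) -` A \<in> sets borel"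
  using measurable_sets[of "\<lambda>t::real. c + t" borel borel A] by auto

lemma distr_Bz_shift:
  "distr (Bz n) (Lam n) (\<lambda>z. \<lambda>i\<in>{..<n}. \<mu> i + z i) = density (Lam n) (phi n \<mu>)"
proof -
  interpret N: product_sigma_finite "\<lambda>i. density lborel (normal_density (\<mu> i) 1)"
    using sf_normal by (rule product_sigma_finite.intro)
  interpret S: product_sigma_finite "\<lambda>i::nat. density lborel std_normal_density"
    using sf_normal by (rule product_sigma_finite.intro)
  have "density (Lam n) (phi n \<mu>) = PiM {..<n} (\<lambda>i. density lborel (normal_density (\<mu> i) 1))"
    unfolding Lam_def phi_def by (rule PiM_normal_density[symmetric]) simp
  also have "\<dots> = distr (Bz n) (Lam n) (\<lambda>z. \<lambda>i\<in>{..<n}. \<mu> i + z i)"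
  proof (rule N.PiM_eqI[symmetric])
    show "sets (distr (Bz n) (Lam n) (\<lambda>z. \<lambda>i\<in>{..<n}. \<mu> i + z i)) =
      sets (PiM {..<n} (\<lambda>i. density lborel (normal_density (\<mu> i) 1)))"
      unfolding Lam_def sets_distr by (intro sets_PiM_cong) simp_all
  next
    fix A assume A: "\<And>i. i \<in> {..<n} \<Longrightarrow> A i \<in> sets (density lborel (normal_density (\<mu> i) 1))"
    then have A': "\<And>i. i \<in> {..<n} \<Longrightarrow> A i \<in> sets borel" by simp
    have PA: "PiE {..<n} A \<in> sets (Lam n)"
      unfolding Lam_def using A' by (intro sets_PiM_I_finite) auto
    have meas: "(\<lambda>z. \<lambda>i\<in>{..<n}. \<mu> i + z i) \<in> Bz n \<rightarrow>\<^sub>M Lam n"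
      by (simp only: measurable_cong_sets[OF sets_Bz refl] measurable_shift)
    have pre: "(\<lambda>z. \<lambda>i\<in>{..<n}. \<mu> i + z i) -` PiE {..<n} A \<inter> space (Lam n) =
       PiE {..<n} (\<lambda>i. (\<lambda>t. \<mu> i + t) -` A i)"
      by (auto simp: Lam_def space_PiM PiE_iff)
    have "emeasure (distr (Bz n) (Lam n) (\<lambda>z. \<lambda>i\<in>{..<n}. \<mu> i + z i)) (PiE {..<n} A)
        = emeasure (Bz n) (PiE {..<n} (\<lambda>i. (\<lambda>t. \<mu> i + t) -` A i))"
      using PA meas by (simp add: emeasure_distr pre)
    also have "\<dots> = (\<Prod>i<n. emeasure (density lborel std_normal_density) ((\<lambda>t. \<mu> i + t) -` A i))"
      unfolding Bz_def using A' by (subst S.emeasure_PiM) (auto intro: pre_borel)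
    also have "\<dots> = (\<Prod>i<n. emeasure (density lborel (normal_density (\<mu> i) 1)) (A i))"
    proof (rule prod.cong[OF refl])
      fix i assume i: "i \<in> {..<n}"
      have "emeasure (density lborel (normal_density (\<mu> i) 1)) (A i) =
         emeasure (distr (density lborel std_normal_density) lborel (\<lambda>t. \<mu> i + t)) (A i)"
        by (simp add: distr_std_normal_shift)
      also have "\<dots> = emeasure (density lborel std_normal_density) ((\<lambda>t. \<mu> i + t) -` A i \<inter> space (density lborel std_normal_density))"
        using A'[OF i] by (intro emeasure_distr) auto
      finally show "emeasure (density lborel std_normal_density) ((\<lambda>t. \<mu> i + t) -` A i) =
         emeasure (density lborel (normal_density (\<mu> i) 1)) (A i)"
        by simp
    qed
    finally show "emeasure (distr (Bz n) (Lam n) (\<lambda>z. \<lambda>i\<in>{..<n}. \<mu> i + z i)) (PiE {..<n} A) =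
         (\<Prod>i\<in>{..<n}. emeasure (density lborel (normal_density (\<mu> i) 1)) (A i))"
      by (simp add: atLeast0LessThan)
  qed simp
  finally show ?thesis ..
qed

lemma set_msg: "M \<ge> 1 \<Longrightarrow> set_pmf (msg_pmf \<alpha> M) \<subseteq> {..M}"
  unfolding msg_pmf_def by (auto split: if_splits)

lemma finite_set_msg: "M \<ge> 1 \<Longrightarrow> finite (set_pmf (msg_pmf \<alpha> M))"
  using set_msg finite_subset by blast

lemma pmf_msg:
  assumes "0 \<le> \<alpha>" "\<alpha> \<le> 1" "1 \<le> w" "w \<le> M"
  shows "pmf (msg_pmf \<alpha> M) w = \<alpha> / M"
proof -
  have "pmf (msg_pmf \<alpha> M) w = (\<Sum>b\<in>UNIV. pmf (if b then pmf_of_set {1..M} else return_pmf 0) w * pmf (bernoulli_pmf \<alpha>) b)"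
    unfolding msg_pmf_def pmf_bind by (rule integral_measure_pmf_real) auto
  also have "\<dots> = \<alpha> / M"
    using assms by (simp add: UNIV_bool indicator_def)
  finally show ?thesis .
qed

lemma int_msg:
  assumes "M \<ge> 1"
  shows "(\<integral>w. f w \<partial>measure_pmf (msg_pmf \<alpha> M)) = (\<Sum>w\<le>M. f w * pmf (msg_pmf \<alpha> M) w)"
  using set_msg[OF assms] by (intro integral_measure_pmf_real) auto

lemma pair_prod_int:
  fixes f :: "'a \<Rightarrow> real" and g :: "'b \<Rightarrow> real"
  assumes A: "prob_space A" and B: "prob_space B"
    and f: "integrable A f" and g: "integrable B g"
  shows "integrable (A \<Otimes>\<^sub>M B) (\<lambda>\<omega>. f (fst \<omega>) * g (snd \<omega>))"
    and "(\<integral>\<omega>. f (fst \<omega>) * g (snd \<omega>) \<partial>(A \<Otimes>\<^sub>M B)) = integral\<^sup>L A f * integral\<^sup>L B g"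
proof -
  interpret A: prob_space A by fact
  interpret B: prob_space B by fact
  interpret AB: pair_sigma_finite A B ..
  have [measurable]: "f \<in> borel_measurable A" "g \<in> borel_measurable B"
    using f g by auto
  show int: "integrable (A \<Otimes>\<^sub>M B) (\<lambda>\<omega>. f (fst \<omega>) * g (snd \<omega>))"
  proof (rule AB.Fubini_integrable)
    show "(\<lambda>\<omega>. f (fst \<omega>) * g (snd \<omega>)) \<in> borel_measurable (A \<Otimes>\<^sub>M B)" by measurable
    have "integrable A (\<lambda>x. \<bar>f x\<bar> * (\<integral>y. norm (g y) \<partial>B))"
      using f by (intro integrable_mult_left) auto
    then show "integrable A (\<lambda>x. \<integral>y. norm (f (fst (x, y)) * g (snd (x, y))) \<partial>B)"
      by (simp add: abs_mult)
    show "AE x in A. integrable B (\<lambda>y. f (fst (x, y)) * g (snd (x, y)))"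
      using g by simp
  qed
  have "(\<integral>\<omega>. f (fst \<omega>) * g (snd \<omega>) \<partial>(A \<Otimes>\<^sub>M B)) = (\<integral>x. (\<integral>y. f (fst (x,y)) * g (snd (x,y)) \<partial>B) \<partial>A)"
    using AB.integral_fst'[OF int] by simp
  also have "\<dots> = (\<integral>x. f x * integral\<^sup>L B g \<partial>A)"
    by simp
  also have "\<dots> = integral\<^sup>L A f * integral\<^sup>L B g" by simp
  finally show "(\<integral>\<omega>. f (fst \<omega>) * g (snd \<omega>) \<partial>(A \<Otimes>\<^sub>M B)) = integral\<^sup>L A f * integral\<^sup>L B g" .
qed

lemma PiM_int_one:
  fixes h :: "'b \<Rightarrow> real"
  fixes I :: "'i set"
  assumes N: "\<And>i. prob_space (N i)" and I: "finite I" "i \<in> I" and h: "integrable (N i) h"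
  shows "integrable (PiM I N) (\<lambda>x. h (x i))" "(\<integral>x. h (x i) \<partial>PiM I N) = integral\<^sup>L (N i) h"
proof -
  interpret product_sigma_finite N
    using N by (simp add: product_sigma_finite_def prob_space_imp_sigma_finite)
  define f where "f t = (if t = i then h else (\<lambda>_. 1::real))" for t
  have eq: "(\<Prod>t\<in>I. f t (x t)) = h (x i)" for x
  proof -
    have "(\<Prod>t\<in>I. f t (x t)) = (\<Prod>t\<in>I. if t = i then h (x t) else 1)"
      by (rule prod.cong) (auto simp: f_def)
    also have "\<dots> = h (x i)" using I by (simp add: prod.delta)
    finally show ?thesis .
  qed
  have fi: "\<And>t. t \<in> I \<Longrightarrow> integrable (N t) (f t)"
    using h N by (auto simp: f_def intro: finite_measure.integrable_const prob_space.axioms(1))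
  show "integrable (PiM I N) (\<lambda>x. h (x i))"
    using product_integrable_prod[OF I(1) fi] by (simp add: eq)
  have "(\<integral>x. h (x i) \<partial>PiM I N) = (\<Prod>t\<in>I. integral\<^sup>L (N t) (f t))"
    using product_integral_prod[OF I(1) fi] by (simp add: eq)
  also have "\<dots> = integral\<^sup>L (N i) h"
    using I N by (simp add: f_def if_distrib prob_space.prob_space cong: if_cong)
  finally show "(\<integral>x. h (x i) \<partial>PiM I N) = integral\<^sup>L (N i) h" .
qed

lemma PiM_int_two:
  fixes h g :: "'b \<Rightarrow> real"
  fixes I :: "'i set"
  assumes N: "\<And>i. prob_space (N i)" and I: "finite I" "i \<in> I" "j \<in> I" "i \<noteq> j"
    and h: "integrable (N i) h" and g: "integrable (N j) g"
  shows "integrable (PiM I N) (\<lambda>x. h (x i) * g (x j))"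
    "(\<integral>x. h (x i) * g (x j) \<partial>PiM I N) = integral\<^sup>L (N i) h * integral\<^sup>L (N j) g"
proof -
  interpret product_sigma_finite N
    using N by (simp add: product_sigma_finite_def prob_space_imp_sigma_finite)
  define f where "f t = (if t = i then h else if t = j then g else (\<lambda>_. 1::real))" for t
  have eq0: "(\<Prod>t\<in>I. F t) = F i * F j" if "\<And>t. t \<in> I \<Longrightarrow> t \<noteq> i \<Longrightarrow> t \<noteq> j \<Longrightarrow> F t = 1" for F :: "'i \<Rightarrow> real"
  proof -
    have "(\<Prod>t\<in>I. F t) = (\<Prod>t\<in>{i,j}. F t)"
      using I that by (intro prod.mono_neutral_right) auto
    then show ?thesis using I by simp
  qed
  have eq: "(\<Prod>t\<in>I. f t (x t)) = h (x i) * g (x j)" for x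
    using I by (subst eq0) (auto simp: f_def)
  have fi: "\<And>t. t \<in> I \<Longrightarrow> integrable (N t) (f t)"
    using h g N by (auto simp: f_def intro: finite_measure.integrable_const prob_space.axioms(1))
  show "integrable (PiM I N) (\<lambda>x. h (x i) * g (x j))"
    using product_integrable_prod[OF I(1) fi] by (simp add: eq)
  have "(\<integral>x. h (x i) * g (x j) \<partial>PiM I N) = (\<Prod>t\<in>I. integral\<^sup>L (N t) (f t))"
    using product_integral_prod[OF I(1) fi] by (simp add: eq)
  also have "\<dots> = integral\<^sup>L (N i) h * integral\<^sup>L (N j) g"
    using I N by (subst eq0) (auto simp: f_def prob_space.prob_space)
  finally show "(\<integral>x. h (x i) * g (x j) \<partial>PiM I N) = integral\<^sup>L (N i) h * integral\<^sup>L (N j) g" .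
qed

definition Aw :: "real \<Rightarrow> nat \<Rightarrow> nat \<Rightarrow> (nat \<Rightarrow> nat) measure" where
  "Aw \<alpha> M l = PiM {..<l} (\<lambda>_. measure_pmf (msg_pmf \<alpha> M))"

definition mu :: "(nat \<Rightarrow> nat \<Rightarrow> nat \<Rightarrow> real) \<Rightarrow> nat \<Rightarrow> (nat \<Rightarrow> nat) \<Rightarrow> nat \<Rightarrow> real" where
  "mu s l w = (\<lambda>i. \<Sum>k<l. s k (w k) i)"

definition Em :: "real \<Rightarrow> nat \<Rightarrow> (nat \<Rightarrow> nat \<Rightarrow> nat \<Rightarrow> real) \<Rightarrow> nat \<Rightarrow> nat \<Rightarrow> real" where
  "Em \<alpha> M s k i = (\<integral>v. s k v i \<partial>measure_pmf (msg_pmf \<alpha> M))"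

definition dd :: "real \<Rightarrow> nat \<Rightarrow> (nat \<Rightarrow> nat \<Rightarrow> nat \<Rightarrow> real) \<Rightarrow> nat \<Rightarrow> (nat \<Rightarrow> nat) \<Rightarrow> nat \<Rightarrow> real" where
  "dd \<alpha> M s l w i = (\<Sum>k<l. s k (w k) i - Em \<alpha> M s k i)"

lemma prob_space_Aw: "prob_space (Aw \<alpha> M l)"
  unfolding Aw_def by (intro prob_space_PiM prob_space_measure_pmf)

lemma meas_Aw_comp[measurable]:
  "k < l \<Longrightarrow> (\<lambda>w. h (w k)) \<in> borel_measurable (Aw \<alpha> M l)"
  unfolding Aw_def
  by (rule measurable_compose[OF measurable_component_singleton[of k]]) auto

lemma meas_mu[measurable]: "(\<lambda>w. mu s l w i) \<in> borel_measurable (Aw \<alpha> M l)"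
  unfolding mu_def by (intro borel_measurable_sum meas_Aw_comp) auto

lemma meas_dd[measurable]: "(\<lambda>w. dd \<alpha> M s l w i) \<in> borel_measurable (Aw \<alpha> M l)"
  unfolding dd_def by (intro borel_measurable_sum meas_Aw_comp) auto

lemma int_Aw_one:
  fixes h :: "nat \<Rightarrow> real"
  assumes "M \<ge> 1" "k < l"
  shows "integrable (Aw \<alpha> M l) (\<lambda>w. h (w k))" "(\<integral>w. h (w k) \<partial>Aw \<alpha> M l) = (\<integral>v. h v \<partial>measure_pmf (msg_pmf \<alpha> M))"
  using PiM_int_one[of "\<lambda>_. measure_pmf (msg_pmf \<alpha> M)" "{..<l}" k h] assms
  by (auto simp: Aw_def prob_space_measure_pmf integrable_measure_pmf_finite finite_set_msg)

lemma int_Aw_two: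
  fixes h g :: "nat \<Rightarrow> real"
  assumes "M \<ge> 1" "k < l" "j < l" "k \<noteq> j"
  shows "integrable (Aw \<alpha> M l) (\<lambda>w. h (w k) * g (w j))"
    "(\<integral>w. h (w k) * g (w j) \<partial>Aw \<alpha> M l) = (\<integral>v. h v \<partial>measure_pmf (msg_pmf \<alpha> M)) * (\<integral>v. g v \<partial>measure_pmf (msg_pmf \<alpha> M))"
  using PiM_int_two[of "\<lambda>_. measure_pmf (msg_pmf \<alpha> M)" "{..<l}" k j h g] assms
  by (auto simp: Aw_def prob_space_measure_pmf integrable_measure_pmf_finite finite_set_msg)

lemma int_dd:
  assumes "M \<ge> 1"
  shows "integrable (Aw \<alpha> M l) (\<lambda>w. dd \<alpha> M s l w i)"
  unfolding dd_def
proof (intro Bochner_Integration.integrable_sum)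
  fix k assume "k \<in> {..<l}"
  then show "integrable (Aw \<alpha> M l) (\<lambda>w. s k (w k) i - Em \<alpha> M s k i)"
    using int_Aw_one(1)[OF assms, where h = "\<lambda>v. s k v i - Em \<alpha> M s k i" and k = k and l = l] by simp
qed

lemma dd_sq:
  assumes M: "M \<ge> 1"
  shows "integrable (Aw \<alpha> M l) (\<lambda>w. (dd \<alpha> M s l w i)\<^sup>2)"
    "(\<integral>w. (dd \<alpha> M s l w i)\<^sup>2 \<partial>Aw \<alpha> M l) \<le> (\<Sum>k<l. \<integral>v. (s k v i)\<^sup>2 \<partial>measure_pmf (msg_pmf \<alpha> M))"
proof -
  let ?p = "measure_pmf (msg_pmf \<alpha> M)"
  define e where "e k v = s k v i - Em \<alpha> M s k i" for k v
  have sq: "(dd \<alpha> M s l w i)\<^sup>2 = (\<Sum>k<l. \<Sum>j<l. e k (w k) * e j (w j))" for w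
    unfolding dd_def e_def power2_eq_square sum_product by simp
  have intp: "integrable ?p f" for f :: "nat \<Rightarrow> real"
    using M by (simp add: integrable_measure_pmf_finite finite_set_msg)
  have Ee: "(\<integral>v. e k v \<partial>?p) = 0" for k
    unfolding e_def Em_def using intp by (simp add: prob_space.prob_space[OF prob_space_measure_pmf])
  have term_int: "integrable (Aw \<alpha> M l) (\<lambda>w. e k (w k) * e j (w j))"
    and term_eq: "(\<integral>w. e k (w k) * e j (w j) \<partial>Aw \<alpha> M l) = (if k = j then \<integral>v. (e k v)\<^sup>2 \<partial>?p else 0)"
    if "k < l" "j < l" for k j
  proof -
    show "integrable (Aw \<alpha> M l) (\<lambda>w. e k (w k) * e j (w j))"
    proof (cases "k = j")
      case True
      then show ?thesis using int_Aw_one[OF M \<open>k < l\<close>, where h = "\<lambda>v. e k v * e k v"] by simp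
    next
      case False
      then show ?thesis using int_Aw_two[OF M that False] by simp
    qed
    show "(\<integral>w. e k (w k) * e j (w j) \<partial>Aw \<alpha> M l) = (if k = j then \<integral>v. (e k v)\<^sup>2 \<partial>?p else 0)"
    proof (cases "k = j")
      case True
      then show ?thesis using int_Aw_one[OF M \<open>k < l\<close>, where h = "\<lambda>v. e k v * e k v"] by (simp add: power2_eq_square)
    next
      case False
      then show ?thesis using int_Aw_two[OF M that False, where h = "e k" and g = "e j"] Ee by simp
    qed
  qed
  show "integrable (Aw \<alpha> M l) (\<lambda>w. (dd \<alpha> M s l w i)\<^sup>2)"
    unfolding sq using term_int by (intro Bochner_Integration.integrable_sum) auto
  have "(\<integral>w. (dd \<alpha> M s l w i)\<^sup>2 \<partial>Aw \<alpha> M l) = (\<Sum>k<l. \<Sum>j<l. \<integral>w. e k (w k) * e j (w j) \<partial>Aw \<alpha> M l)"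
  proof -
    have "(\<integral>w. (dd \<alpha> M s l w i)\<^sup>2 \<partial>Aw \<alpha> M l) = (\<Sum>k<l. \<integral>w. (\<Sum>j<l. e k (w k) * e j (w j)) \<partial>Aw \<alpha> M l)"
      unfolding sq by (intro Bochner_Integration.integral_sum Bochner_Integration.integrable_sum term_int) auto
    also have "\<dots> = (\<Sum>k<l. \<Sum>j<l. \<integral>w. e k (w k) * e j (w j) \<partial>Aw \<alpha> M l)"
      by (intro sum.cong refl Bochner_Integration.integral_sum term_int) auto
    finally show ?thesis .
  qed
  also have "\<dots> = (\<Sum>k<l. \<Sum>j<l. if k = j then \<integral>v. (e k v)\<^sup>2 \<partial>?p else 0)"
    using term_eq by (intro sum.cong refl) auto
  also have "\<dots> = (\<Sum>k<l. \<integral>v. (e k v)\<^sup>2 \<partial>?p)"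
    by (simp add: sum.delta)
  also have "\<dots> \<le> (\<Sum>k<l. \<integral>v. (s k v i)\<^sup>2 \<partial>?p)"
  proof (rule sum_mono)
    fix k
    define m where "m = Em \<alpha> M s k i"
    have "(\<integral>v. (e k v)\<^sup>2 \<partial>?p) = (\<integral>v. (s k v i)\<^sup>2 - 2 * m * s k v i + m\<^sup>2 \<partial>?p)"
      unfolding e_def m_def[symmetric] by (intro Bochner_Integration.integral_cong refl) (simp add: power2_diff algebra_simps)
    also have "\<dots> = (\<integral>v. (s k v i)\<^sup>2 \<partial>?p) - 2 * m * m + m\<^sup>2"
      using intp by (simp add: m_def Em_def prob_space.prob_space[OF prob_space_measure_pmf])
    also have "\<dots> \<le> (\<integral>v. (s k v i)\<^sup>2 \<partial>?p)"
      by (simp add: power2_eq_square)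
    finally show "(\<integral>v. (e k v)\<^sup>2 \<partial>?p) \<le> (\<integral>v. (s k v i)\<^sup>2 \<partial>?p)" .
  qed
  finally show "(\<integral>w. (dd \<alpha> M s l w i)\<^sup>2 \<partial>Aw \<alpha> M l) \<le> (\<Sum>k<l. \<integral>v. (s k v i)\<^sup>2 \<partial>?p)" .
qed

lemma power_sum_bound:
  fixes s :: "nat \<Rightarrow> nat \<Rightarrow> nat \<Rightarrow> real"
  assumes M: "M \<ge> 1" and n: "n \<ge> 1" and a: "0 \<le> \<alpha>" "\<alpha> \<le> 1"
    and s0: "\<And>k i. k < l \<Longrightarrow> i < n \<Longrightarrow> s k 0 i = 0"
    and pw: "\<And>k w. k < l \<Longrightarrow> w \<le> M \<Longrightarrow> (1 / real n) * (\<Sum>i<n. (s k w i)\<^sup>2) \<le> P"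
  shows "(\<Sum>i<n. \<Sum>k<l. \<integral>v. (s k v i)\<^sup>2 \<partial>measure_pmf (msg_pmf \<alpha> M)) \<le> real n * (\<alpha> * real l * P)"
proof -
  let ?p = "msg_pmf \<alpha> M"
  have "(\<Sum>i<n. \<Sum>k<l. \<integral>v. (s k v i)\<^sup>2 \<partial>measure_pmf ?p) = (\<Sum>k<l. \<Sum>i<n. \<Sum>v\<le>M. (s k v i)\<^sup>2 * pmf ?p v)"
    by (subst sum.swap) (simp add: int_msg[OF M])
  also have "\<dots> = (\<Sum>k<l. \<Sum>v\<in>{1..M}. \<alpha> / M * (\<Sum>i<n. (s k v i)\<^sup>2))"
  proof (rule sum.cong[OF refl])
    fix k assume k: "k \<in> {..<l}"
    have "(\<Sum>i<n. \<Sum>v\<le>M. (s k v i)\<^sup>2 * pmf ?p v) = (\<Sum>v\<le>M. \<Sum>i<n. (s k v i)\<^sup>2 * pmf ?p v)"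
      by (rule sum.swap)
    also have "\<dots> = (\<Sum>v\<in>{1..M}. \<Sum>i<n. (s k v i)\<^sup>2 * pmf ?p v)"
    proof (rule sum.mono_neutral_right)
      show "\<forall>v\<in>{..M} - {1..M}. (\<Sum>i<n. (s k v i)\<^sup>2 * pmf ?p v) = 0"
      proof
        fix v assume "v \<in> {..M} - {1..M}"
        then have "v = 0" by auto
        then show "(\<Sum>i<n. (s k v i)\<^sup>2 * pmf ?p v) = 0"
          using k s0 by (intro sum.neutral) auto
      qed
    qed auto
    also have "\<dots> = (\<Sum>v\<in>{1..M}. \<alpha> / M * (\<Sum>i<n. (s k v i)\<^sup>2))"
      using a by (intro sum.cong refl) (auto simp: pmf_msg sum_distrib_left mult.commute)
    finally show "(\<Sum>i<n. \<Sum>v\<le>M. (s k v i)\<^sup>2 * pmf ?p v) = (\<Sum>v\<in>{1..M}. \<alpha> / M * (\<Sum>i<n. (s k v i)\<^sup>2))" .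
  qed
  also have "\<dots> \<le> (\<Sum>k<l. \<Sum>v\<in>{1..M}. \<alpha> / M * (real n * P))"
  proof (intro sum_mono mult_left_mono)
    fix k v assume "k \<in> {..<l}" "v \<in> {1..M}"
    then have "(1 / real n) * (\<Sum>i<n. (s k v i)\<^sup>2) \<le> P" using pw by auto
    then show "(\<Sum>i<n. (s k v i)\<^sup>2) \<le> real n * P"
      using n by (simp add: field_simps)
  qed (use a in auto)
  also have "\<dots> = real n * (\<alpha> * real l * P)"
    using M by (simp add: field_simps)
  finally show ?thesis .
qed

lemma mac_space_eq: "mac_space \<alpha> M l n = Aw \<alpha> M l \<Otimes>\<^sub>M Bz n"
  unfolding mac_space_def Aw_def Bz_def ..

lemma sf_Lam: "sigma_finite_measure (Lam n)"
proof -
  interpret product_sigma_finite "\<lambda>_::nat. lborel" by standard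
  show ?thesis unfolding Lam_def by (rule sigma_finite) simp
qed

lemma meas_Lam_comp[measurable]: "i < n \<Longrightarrow> (\<lambda>y. y i) \<in> borel_measurable (Lam n)"
  unfolding Lam_def
  using measurable_component_singleton[of i "{..<n}" "\<lambda>_. lborel"] by (simp add: measurable_lborel1)

lemma meas_Bz_comp[measurable]: "i < n \<Longrightarrow> (\<lambda>y. y i) \<in> borel_measurable (Bz n)"
  using meas_Lam_comp by (simp only: measurable_cong_sets[OF sets_Bz refl])

lemma meas_Y[measurable]: "mac_Y s l n \<in> (Aw \<alpha> M l \<Otimes>\<^sub>M Bz n) \<rightarrow>\<^sub>M Lam n"
  unfolding mac_Y_def Lam_def
proof (intro measurable_restrict)
  fix i assume i: "i \<in> {..<n}"
  have 1: "(\<lambda>\<omega>. mu s l (fst \<omega>) i) \<in> borel_measurable (Aw \<alpha> M l \<Otimes>\<^sub>M Bz n)"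
    by (rule measurable_compose[OF measurable_fst meas_mu])
  have 2: "(\<lambda>\<omega>. snd \<omega> i) \<in> borel_measurable (Aw \<alpha> M l \<Otimes>\<^sub>M Bz n)"
    by (rule measurable_compose[OF measurable_snd meas_Bz_comp]) (use i in auto)
  have "(\<lambda>\<omega>. mu s l (fst \<omega>) i + snd \<omega> i) \<in> borel_measurable (Aw \<alpha> M l \<Otimes>\<^sub>M Bz n)"
    using 1 2 by (rule borel_measurable_add)
  then show "(\<lambda>\<omega>. (\<Sum>k<l. s k (fst \<omega> k) i) + snd \<omega> i) \<in> (Aw \<alpha> M l \<Otimes>\<^sub>M Bz n) \<rightarrow>\<^sub>M lborel"
    by (simp add: mu_def measurable_lborel2)
qed

lemma mac_Y_eq: "mac_Y s l n \<omega> = (\<lambda>i\<in>{..<n}. mu s l (fst \<omega>) i + snd \<omega> i)"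
  unfolding mac_Y_def mu_def ..

lemma normal_density_le1: "normal_density m 1 x \<le> 1"
proof -
  have "exp (- (x - m)\<^sup>2 / 2) \<le> 1" by simp
  moreover have "1 / sqrt (2 * pi) \<le> 1"
    using pi_gt3 by (simp add: divide_le_eq real_le_rsqrt)
  ultimately have "1 / sqrt (2 * pi) * exp (- (x - m)\<^sup>2 / 2) \<le> 1 * 1"
    by (intro mult_mono) auto
  then show ?thesis by (simp add: normal_density_def)
qed

lemma phi_nonneg: "0 \<le> phi n m y"
  unfolding phi_def by (intro prod_nonneg) auto

lemma phi_pos: "0 < phi n m y"
  unfolding phi_def by (intro prod_pos normal_density_pos) auto

lemma phi_le1: "phi n m y \<le> 1"
  unfolding phi_def by (intro prod_le_1) (auto simp: normal_density_le1)

lemma meas_phi_pair[measurable]: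
  "(\<lambda>p. phi n (mu s l (fst p)) (snd p)) \<in> borel_measurable (Aw \<alpha> M l \<Otimes>\<^sub>M Lam n)"
  unfolding phi_def normal_density_def by measurable

definition pY :: "real \<Rightarrow> nat \<Rightarrow> (nat \<Rightarrow> nat \<Rightarrow> nat \<Rightarrow> real) \<Rightarrow> nat \<Rightarrow> nat \<Rightarrow> (nat \<Rightarrow> real) \<Rightarrow> real" where
  "pY \<alpha> M s l n y = (\<integral>w. phi n (mu s l w) y \<partial>Aw \<alpha> M l)"

lemma int_phi_Aw: "integrable (Aw \<alpha> M l) (\<lambda>w. phi n (mu s l w) y)"
proof -
  interpret prob_space "Aw \<alpha> M l" by (rule prob_space_Aw)
  have m: "(\<lambda>w. phi n (mu s l w) y) \<in> borel_measurable (Aw \<alpha> M l)"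
    unfolding phi_def normal_density_def by measurable
  show ?thesis
    by (rule integrable_const_bound[where B=1]) (auto simp: phi_nonneg phi_le1 m)
qed

lemma meas_phi_pair2[measurable]:
  "(\<lambda>p. phi n (mu s l (snd p)) (fst p)) \<in> borel_measurable (Lam n \<Otimes>\<^sub>M Aw \<alpha> M l)"
  unfolding phi_def normal_density_def by measurable

lemma meas_pY[measurable]: "pY \<alpha> M s l n \<in> borel_measurable (Lam n)"
proof -
  interpret prob_space "Aw \<alpha> M l" by (rule prob_space_Aw)
  have "(\<lambda>y. \<integral>w. phi n (mu s l w) y \<partial>Aw \<alpha> M l) \<in> borel_measurable (Lam n)"
    by (rule borel_measurable_lebesgue_integral) (simp add: case_prod_beta')
  then show ?thesis unfolding pY_def[abs_def] .
qed

lemma meas_phi[measurable]: "phi n m \<in> borel_measurable (Lam n)"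
  unfolding phi_def[abs_def] normal_density_def by measurable

lemma meas_phi_Aw[measurable]: "(\<lambda>w. phi n (mu s l w) y) \<in> borel_measurable (Aw \<alpha> M l)"
  unfolding phi_def normal_density_def by measurable

lemma inner_shift:
  assumes f[measurable]: "f \<in> borel_measurable (Lam n)"
  shows "(\<integral>\<^sup>+ z. f (\<lambda>i\<in>{..<n}. m i + z i) \<partial>Bz n) = (\<integral>\<^sup>+ y. ennreal (phi n m y) * f y \<partial>Lam n)"
proof -
  have meas: "(\<lambda>z. \<lambda>i\<in>{..<n}. m i + z i) \<in> Bz n \<rightarrow>\<^sub>M Lam n"
    by (simp only: measurable_cong_sets[OF sets_Bz refl] measurable_shift)
  have "(\<integral>\<^sup>+ z. f (\<lambda>i\<in>{..<n}. m i + z i) \<partial>Bz n) = (\<integral>\<^sup>+ y. f y \<partial>distr (Bz n) (Lam n) (\<lambda>z. \<lambda>i\<in>{..<n}. m i + z i))"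
    using meas by (simp add: nn_integral_distr)
  also have "\<dots> = (\<integral>\<^sup>+ y. f y \<partial>density (Lam n) (phi n m))"
    by (simp add: distr_Bz_shift)
  also have "\<dots> = (\<integral>\<^sup>+ y. ennreal (phi n m y) * f y \<partial>Lam n)"
    by (simp add: nn_integral_density)
  finally show ?thesis .
qed

lemma pY_nn_integral:
  "(\<integral>\<^sup>+ w. ennreal (phi n (mu s l w) y) \<partial>Aw \<alpha> M l) = ennreal (pY \<alpha> M s l n y)"
  unfolding pY_def
  by (rule nn_integral_eq_integral[OF int_phi_Aw]) (simp add: phi_nonneg)

lemma distributed_Y:
  "distributed (Aw \<alpha> M l \<Otimes>\<^sub>M Bz n) (Lam n) (mac_Y s l n) (\<lambda>y. ennreal (pY \<alpha> M s l n y))"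
  unfolding distributed_def
proof (intro conjI)
  show "mac_Y s l n \<in> (Aw \<alpha> M l \<Otimes>\<^sub>M Bz n) \<rightarrow>\<^sub>M Lam n" by (rule meas_Y)
  show "(\<lambda>y. ennreal (pY \<alpha> M s l n y)) \<in> borel_measurable (Lam n)" by measurable
  interpret Bp: prob_space "Bz n" by (rule prob_space_Bz)
  interpret Ap: prob_space "Aw \<alpha> M l" by (rule prob_space_Aw)
  interpret L: sigma_finite_measure "Lam n" by (rule sf_Lam)
  interpret AL: pair_sigma_finite "Aw \<alpha> M l" "Lam n" ..
  show "distr (Aw \<alpha> M l \<Otimes>\<^sub>M Bz n) (Lam n) (mac_Y s l n) = density (Lam n) (\<lambda>y. ennreal (pY \<alpha> M s l n y))"
  proof (rule measure_eqI)
    fix C assume "C \<in> sets (distr (Aw \<alpha> M l \<Otimes>\<^sub>M Bz n) (Lam n) (mac_Y s l n))"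
    then have C[measurable]: "C \<in> sets (Lam n)" by simp
    have "emeasure (distr (Aw \<alpha> M l \<Otimes>\<^sub>M Bz n) (Lam n) (mac_Y s l n)) C
        = (\<integral>\<^sup>+ \<omega>. indicator C (mac_Y s l n \<omega>) \<partial>(Aw \<alpha> M l \<Otimes>\<^sub>M Bz n))"
    proof -
      have "emeasure (distr (Aw \<alpha> M l \<Otimes>\<^sub>M Bz n) (Lam n) (mac_Y s l n)) C
         = (\<integral>\<^sup>+ x. indicator C x \<partial>distr (Aw \<alpha> M l \<Otimes>\<^sub>M Bz n) (Lam n) (mac_Y s l n))"
        by (rule nn_integral_indicator[symmetric]) simp
      also have "\<dots> = (\<integral>\<^sup>+ \<omega>. indicator C (mac_Y s l n \<omega>) \<partial>(Aw \<alpha> M l \<Otimes>\<^sub>M Bz n))"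
        by (rule nn_integral_distr) measurable
      finally show ?thesis .
    qed
    also have "\<dots> = (\<integral>\<^sup>+ w. \<integral>\<^sup>+ z. indicator C (mac_Y s l n (w, z)) \<partial>Bz n \<partial>Aw \<alpha> M l)"
      by (rule Bp.nn_integral_fst[symmetric]) measurable
    also have "\<dots> = (\<integral>\<^sup>+ w. \<integral>\<^sup>+ y. ennreal (phi n (mu s l w) y) * indicator C y \<partial>Lam n \<partial>Aw \<alpha> M l)"
      by (simp add: mac_Y_eq inner_shift)
    also have "\<dots> = (\<integral>\<^sup>+ y. \<integral>\<^sup>+ w. ennreal (phi n (mu s l w) y) * indicator C y \<partial>Aw \<alpha> M l \<partial>Lam n)"
      by (rule AL.Fubini'[symmetric]) measurable
    also have "\<dots> = (\<integral>\<^sup>+ y. ennreal (pY \<alpha> M s l n y) * indicator C y \<partial>Lam n)"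
      by (intro nn_integral_cong) (subst nn_integral_multc, measurable, simp add: pY_nn_integral)
    also have "\<dots> = emeasure (density (Lam n) (\<lambda>y. ennreal (pY \<alpha> M s l n y))) C"
      by (simp add: emeasure_density)
    finally show "emeasure (distr (Aw \<alpha> M l \<Otimes>\<^sub>M Bz n) (Lam n) (mac_Y s l n)) C = emeasure (density (Lam n) (\<lambda>y. ennreal (pY \<alpha> M s l n y))) C" .
  qed simp
qed

definition SX :: "nat \<Rightarrow> nat \<Rightarrow> (nat \<Rightarrow> real) measure" where
  "SX M l = PiM {..<l*M} (\<lambda>_. count_space UNIV)"

definition Xg :: "nat \<Rightarrow> nat \<Rightarrow> (nat \<Rightarrow> nat) \<Rightarrow> nat \<Rightarrow> real" where
  "Xg M l w = (\<lambda>j\<in>{..<l*M}. if w (j div M) = j mod M + 1 then 1 else 0)"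

definition nu :: "(nat \<Rightarrow> nat \<Rightarrow> nat \<Rightarrow> real) \<Rightarrow> nat \<Rightarrow> nat \<Rightarrow> (nat \<Rightarrow> real) \<Rightarrow> nat \<Rightarrow> real" where
  "nu s M l x = (\<lambda>i. \<Sum>k<l. \<Sum>m\<in>{1..M}. x (k*M + m - 1) * s k m i)"

lemma mac_X_eq: "mac_X M l \<omega> = Xg M l (fst \<omega>)"
  unfolding mac_X_def Xg_def ..

lemma meas_Aw_any: "k < l \<Longrightarrow> h \<in> UNIV \<rightarrow> space N \<Longrightarrow> (\<lambda>w. h (w k)) \<in> Aw \<alpha> M l \<rightarrow>\<^sub>M N"
  unfolding Aw_def
  by (rule measurable_compose[OF measurable_component_singleton[of k]]) auto

lemma meas_Xg[measurable]: "Xg M l \<in> Aw \<alpha> M l \<rightarrow>\<^sub>M SX M l"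
  unfolding Xg_def SX_def
proof (intro measurable_restrict)
  fix j assume j: "j \<in> {..<l*M}"
  then have "j div M < l"
    by (metis lessThan_iff less_mult_imp_div_less mult.commute)
  then show "(\<lambda>w. if w (j div M) = j mod M + 1 then 1 else 0 :: real) \<in> Aw \<alpha> M l \<rightarrow>\<^sub>M count_space UNIV"
    by (intro meas_Aw_any[where h = "\<lambda>v. if v = j mod M + 1 then 1 else 0"]) auto
qed

lemma meas_X[measurable]: "mac_X M l \<in> (Aw \<alpha> M l \<Otimes>\<^sub>M Bz n) \<rightarrow>\<^sub>M SX M l"
  unfolding mac_X_eq[abs_def] by (rule measurable_compose[OF measurable_fst meas_Xg])

lemma meas_SX_comp: "j < l*M \<Longrightarrow> (\<lambda>x. x j) \<in> borel_measurable (SX M l)"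
  unfolding SX_def
  by (rule measurable_compose[OF measurable_component_singleton[of j]]) auto

lemma meas_nu: "(\<lambda>x. nu s M l x i) \<in> borel_measurable (SX M l)"
  unfolding nu_def
proof (intro borel_measurable_sum borel_measurable_times borel_measurable_const)
  fix k m assume "k \<in> {..<l}" "m \<in> {1..M}"
  then have "k*M + m - 1 < l*M"
  proof -
    assume a: "k \<in> {..<l}" "m \<in> {1..M}"
    then have "k*M + m - 1 < k*M + M" by auto
    also have "\<dots> = (k+1)*M" by simp
    also have "\<dots> \<le> l*M" using a by (intro mult_right_mono) auto
    finally show ?thesis .
  qed
  then show "(\<lambda>x. x (k*M + m - 1)) \<in> borel_measurable (SX M l)" by (rule meas_SX_comp)
qed

lemma nu_Xg:
  assumes s0: "\<And>k i. k < l \<Longrightarrow> i < n \<Longrightarrow> s k 0 i = 0" and w: "\<forall>k<l. w k \<le> M" and i: "i < n"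
  shows "nu s M l (Xg M l w) i = mu s l w i"
  unfolding nu_def mu_def
proof (rule sum.cong[OF refl])
  fix k assume k: "k \<in> {..<l}"
  have eq: "Xg M l w (k*M + m - 1) = (if w k = m then 1 else 0)" if m: "m \<in> {1..M}" for m
  proof -
    have lt: "k*M + m - 1 < l*M"
    proof -
      have "k*M + m - 1 < k*M + M" using m by auto
      also have "\<dots> = (k+1)*M" by simp
      also have "\<dots> \<le> l*M" using k by (intro mult_right_mono) auto
      finally show ?thesis .
    qed
    obtain r where r: "m = r + 1" using m by (cases m) auto
    have rM: "r < M" using m r by auto
    have j: "k*M + m - 1 = k*M + r" using r by auto
    have "(k*M + r) div M = k" "(k*M + r) mod M = r"
      using rM by auto
    then have "(k*M + m - 1) div M = k" "(k*M + m - 1) mod M = m - 1"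
      using j r by auto
    then show ?thesis using lt m unfolding Xg_def by auto
  qed
  have "(\<Sum>m\<in>{1..M}. Xg M l w (k*M + m - 1) * s k m i) = (\<Sum>m\<in>{1..M}. if w k = m then s k m i else 0)"
  proof (rule sum.cong[OF refl])
    fix m assume m: "m \<in> {1..M}"
    show "Xg M l w (k*M + m - 1) * s k m i = (if w k = m then s k m i else 0)"
      using eq[OF m] by simp
  qed
  also have "\<dots> = (if w k \<in> {1..M} then s k (w k) i else 0)"
    by (simp add: sum.delta')
  also have "\<dots> = s k (w k) i"
    using w k s0[of k i] i by (cases "w k = 0") auto
  finally show "(\<Sum>m\<in>{1..M}. Xg M l w (k*M + m - 1) * s k m i) = s k (w k) i" .
qed

lemma phi_nu_Xg:
  assumes s0: "\<And>k i. k < l \<Longrightarrow> i < n \<Longrightarrow> s k 0 i = 0" and w: "\<forall>k<l. w k \<le> M"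
  shows "phi n (nu s M l (Xg M l w)) = phi n (mu s l w)"
proof -
  have e: "\<And>i. i < n \<Longrightarrow> nu s M l (Xg M l w) i = mu s l w i"
    using s0 w by (intro nu_Xg) auto
  show ?thesis
    unfolding phi_def[abs_def] using e by (intro ext prod.cong) auto
qed

lemma AE_Aw_le:
  assumes "M \<ge> 1"
  shows "AE w in Aw \<alpha> M l. \<forall>k<l. w k \<le> M"
proof -
  have "AE w in Aw \<alpha> M l. \<forall>k\<in>{..<l}. w k \<le> M"
  proof (rule AE_ball_countable')
    fix k assume k: "k \<in> {..<l}"
    have "AE v in measure_pmf (msg_pmf \<alpha> M). v \<le> M"
      using set_msg[OF assms] by (auto simp: AE_measure_pmf_iff)
    then show "AE w in Aw \<alpha> M l. w k \<le> M"
      unfolding Aw_def using k by (intro AE_PiM_component) (auto simp: prob_space_measure_pmf)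
  qed auto
  then show ?thesis by (rule eventually_mono) auto
qed

definition Sx :: "real \<Rightarrow> nat \<Rightarrow> nat \<Rightarrow> nat \<Rightarrow> (nat \<Rightarrow> real) measure" where
  "Sx \<alpha> M l n = distr (Aw \<alpha> M l \<Otimes>\<^sub>M Bz n) (SX M l) (mac_X M l)"

lemma sets_Sx[simp, measurable_cong]: "sets (Sx \<alpha> M l n) = sets (SX M l)"
  unfolding Sx_def by simp

lemma space_Sx[simp]: "space (Sx \<alpha> M l n) = space (SX M l)"
  unfolding Sx_def by simp

definition Pj :: "(nat \<Rightarrow> nat \<Rightarrow> nat \<Rightarrow> real) \<Rightarrow> nat \<Rightarrow> nat \<Rightarrow> nat \<Rightarrow> (nat \<Rightarrow> real) \<times> (nat \<Rightarrow> real) \<Rightarrow> real" where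
  "Pj s M l n p = phi n (nu s M l (fst p)) (snd p)"

lemma Pj_nonneg: "0 \<le> Pj s M l n p"
  unfolding Pj_def by (rule phi_nonneg)

lemma meas_nu_Sx[measurable]: "(\<lambda>x. nu s M l x i) \<in> borel_measurable (Sx \<alpha> M l n)"
  using meas_nu by (simp only: measurable_cong_sets[OF sets_Sx refl])

lemma meas_Pj[measurable]: "Pj s M l n \<in> borel_measurable (Sx \<alpha> M l n \<Otimes>\<^sub>M Lam n)"
  unfolding Pj_def[abs_def] phi_def normal_density_def by measurable

lemma prob_space_M: "prob_space (Aw \<alpha> M l \<Otimes>\<^sub>M Bz n)"
  by (intro prob_space_pair prob_space_Aw prob_space_Bz)

lemma prob_space_Sx: "prob_space (Sx \<alpha> M l n)"
  unfolding Sx_def by (intro prob_space.prob_space_distr prob_space_M meas_X)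

lemma Xg_space: "Xg M l w \<in> space (SX M l)"
  unfolding SX_def Xg_def by (simp add: space_PiM)

lemma distributed_XY:
  assumes s0: "\<And>k i. k < l \<Longrightarrow> i < n \<Longrightarrow> s k 0 i = 0" and M: "M \<ge> 1"
  shows "distributed (Aw \<alpha> M l \<Otimes>\<^sub>M Bz n) (Sx \<alpha> M l n \<Otimes>\<^sub>M Lam n)
           (\<lambda>\<omega>. (mac_X M l \<omega>, mac_Y s l n \<omega>)) (\<lambda>p. ennreal (Pj s M l n p))"
  unfolding distributed_def
proof (intro conjI)
  show "(\<lambda>\<omega>. (mac_X M l \<omega>, mac_Y s l n \<omega>)) \<in> (Aw \<alpha> M l \<Otimes>\<^sub>M Bz n) \<rightarrow>\<^sub>M (Sx \<alpha> M l n \<Otimes>\<^sub>M Lam n)"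
    by measurable
  show "(\<lambda>p. ennreal (Pj s M l n p)) \<in> borel_measurable (Sx \<alpha> M l n \<Otimes>\<^sub>M Lam n)" by measurable
  interpret Bp: prob_space "Bz n" by (rule prob_space_Bz)
  interpret Ap: prob_space "Aw \<alpha> M l" by (rule prob_space_Aw)
  interpret L: sigma_finite_measure "Lam n" by (rule sf_Lam)
  let ?M = "Aw \<alpha> M l \<Otimes>\<^sub>M Bz n"
  let ?N = "Sx \<alpha> M l n \<Otimes>\<^sub>M Lam n"
  show "distr ?M ?N (\<lambda>\<omega>. (mac_X M l \<omega>, mac_Y s l n \<omega>)) = density ?N (\<lambda>p. ennreal (Pj s M l n p))"
  proof (rule measure_eqI)
    fix C assume "C \<in> sets (distr ?M ?N (\<lambda>\<omega>. (mac_X M l \<omega>, mac_Y s l n \<omega>)))"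
    then have C[measurable]: "C \<in> sets ?N" by simp
    have sN: "sets ?N = sets (SX M l \<Otimes>\<^sub>M Lam n)"
      by (rule sets_pair_measure_cong) simp_all
    have C2: "C \<in> sets (SX M l \<Otimes>\<^sub>M Lam n)" using C sN by simp
    have iC: "(\<lambda>y. indicator C (Xg M l w, y)) \<in> borel_measurable (Lam n)" for w
    proof -
      have "(\<lambda>y. (Xg M l w, y)) \<in> Lam n \<rightarrow>\<^sub>M ?N"
        using Xg_space by (intro measurable_Pair1') simp
      then show ?thesis by measurable
    qed
    have "emeasure (distr ?M ?N (\<lambda>\<omega>. (mac_X M l \<omega>, mac_Y s l n \<omega>))) C
        = (\<integral>\<^sup>+ \<omega>. indicator C (mac_X M l \<omega>, mac_Y s l n \<omega>) \<partial>?M)"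
    proof -
      have "emeasure (distr ?M ?N (\<lambda>\<omega>. (mac_X M l \<omega>, mac_Y s l n \<omega>))) C
         = (\<integral>\<^sup>+ x. indicator C x \<partial>distr ?M ?N (\<lambda>\<omega>. (mac_X M l \<omega>, mac_Y s l n \<omega>)))"
        by (rule nn_integral_indicator[symmetric]) (use C2 in simp)
      also have "\<dots> = (\<integral>\<^sup>+ \<omega>. indicator C (mac_X M l \<omega>, mac_Y s l n \<omega>) \<partial>?M)"
        by (rule nn_integral_distr) measurable
      finally show ?thesis .
    qed
    also have "\<dots> = (\<integral>\<^sup>+ w. \<integral>\<^sup>+ z. indicator C (mac_X M l (w, z), mac_Y s l n (w, z)) \<partial>Bz n \<partial>Aw \<alpha> M l)"
      by (rule Bp.nn_integral_fst[symmetric]) measurable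
    also have "\<dots> = (\<integral>\<^sup>+ w. \<integral>\<^sup>+ y. ennreal (phi n (mu s l w) y) * indicator C (Xg M l w, y) \<partial>Lam n \<partial>Aw \<alpha> M l)"
    proof (rule nn_integral_cong)
      fix w
      show "(\<integral>\<^sup>+ z. indicator C (mac_X M l (w, z), mac_Y s l n (w, z)) \<partial>Bz n) =
            (\<integral>\<^sup>+ y. ennreal (phi n (mu s l w) y) * indicator C (Xg M l w, y) \<partial>Lam n)"
        unfolding mac_X_eq mac_Y_eq fst_conv snd_conv
        by (rule inner_shift[where f = "\<lambda>y. indicator C (Xg M l w, y)", OF iC])
    qed
    finally have L: "emeasure (distr ?M ?N (\<lambda>\<omega>. (mac_X M l \<omega>, mac_Y s l n \<omega>))) C
       = (\<integral>\<^sup>+ w. \<integral>\<^sup>+ y. ennreal (phi n (mu s l w) y) * indicator C (Xg M l w, y) \<partial>Lam n \<partial>Aw \<alpha> M l)" .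
    define H where "H x = (\<integral>\<^sup>+ y. ennreal (Pj s M l n (x, y)) * indicator C (x, y) \<partial>Lam n)" for x
    have Hm: "H \<in> borel_measurable (SX M l)"
    proof -
      have "H \<in> borel_measurable (Sx \<alpha> M l n)"
        unfolding H_def by (rule L.borel_measurable_nn_integral_fst[where f = "\<lambda>p. ennreal (Pj s M l n p) * indicator C p", simplified]) measurable
      then show ?thesis by (simp only: measurable_cong_sets[OF sets_Sx refl])
    qed
    have "emeasure (density ?N (\<lambda>p. ennreal (Pj s M l n p))) C = (\<integral>\<^sup>+ p. ennreal (Pj s M l n p) * indicator C p \<partial>?N)"
      by (rule emeasure_density) (use C in measurable)
    also have "\<dots> = (\<integral>\<^sup>+ x. H x \<partial>Sx \<alpha> M l n)"
      unfolding H_def by (rule L.nn_integral_fst[symmetric]) measurable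
    also have "\<dots> = (\<integral>\<^sup>+ \<omega>. H (mac_X M l \<omega>) \<partial>?M)"
      unfolding Sx_def using Hm by (intro nn_integral_distr) measurable
    also have "\<dots> = (\<integral>\<^sup>+ w. \<integral>\<^sup>+ z. H (mac_X M l (w, z)) \<partial>Bz n \<partial>Aw \<alpha> M l)"
      by (rule Bp.nn_integral_fst[symmetric]) (use Hm in measurable)
    also have "\<dots> = (\<integral>\<^sup>+ w. H (Xg M l w) \<partial>Aw \<alpha> M l)"
    proof -
      have e1: "emeasure (Bz n) (space (Lam n)) = 1" using Bp.emeasure_space_1 by simp
      show ?thesis by (simp add: mac_X_eq e1)
    qed
    also have "\<dots> = (\<integral>\<^sup>+ w. \<integral>\<^sup>+ y. ennreal (phi n (mu s l w) y) * indicator C (Xg M l w, y) \<partial>Lam n \<partial>Aw \<alpha> M l)"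
    proof (rule nn_integral_cong_AE)
      show "AE w in Aw \<alpha> M l. H (Xg M l w) = (\<integral>\<^sup>+ y. ennreal (phi n (mu s l w) y) * indicator C (Xg M l w, y) \<partial>Lam n)"
        using AE_Aw_le[OF M]
      proof (rule eventually_mono)
        fix w assume w: "\<forall>k<l. w k \<le> M"
        show "H (Xg M l w) = (\<integral>\<^sup>+ y. ennreal (phi n (mu s l w) y) * indicator C (Xg M l w, y) \<partial>Lam n)"
        proof -
          have e: "phi n (nu s M l (Xg M l w)) = phi n (mu s l w)"
            using s0 w by (intro phi_nu_Xg) auto
          show ?thesis unfolding H_def Pj_def fst_conv snd_conv e ..
        qed
      qed
    qed
    finally show "emeasure (distr ?M ?N (\<lambda>\<omega>. (mac_X M l \<omega>, mac_Y s l n \<omega>))) C = emeasure (density ?N (\<lambda>p. ennreal (Pj s M l n p))) C"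
      using L by simp
  qed simp
qed

lemma distributed_X:
  "distributed (Aw \<alpha> M l \<Otimes>\<^sub>M Bz n) (Sx \<alpha> M l n) (mac_X M l) (\<lambda>x. ennreal 1)"
  unfolding distributed_def
proof (intro conjI)
  show "mac_X M l \<in> (Aw \<alpha> M l \<Otimes>\<^sub>M Bz n) \<rightarrow>\<^sub>M Sx \<alpha> M l n"
    by (simp only: measurable_cong_sets[OF refl sets_Sx] meas_X)
  show "(\<lambda>x. ennreal 1) \<in> borel_measurable (Sx \<alpha> M l n)" by simp
  have "distr (Aw \<alpha> M l \<Otimes>\<^sub>M Bz n) (Sx \<alpha> M l n) (mac_X M l) = Sx \<alpha> M l n"
    unfolding Sx_def by (rule distr_cong) simp_all
  then show "distr (Aw \<alpha> M l \<Otimes>\<^sub>M Bz n) (Sx \<alpha> M l n) (mac_X M l) = density (Sx \<alpha> M l n) (\<lambda>x. ennreal 1)"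
    by (simp add: density_1)
qed

lemma std_int_x: "integrable (density lborel std_normal_density) (\<lambda>x::real. x)"
    "(\<integral>x. x \<partial>density lborel std_normal_density) = 0"
proof -
  have i: "integrable lborel (\<lambda>x::real. std_normal_density x * x)"
    using integrable_std_normal_moment[of 1] by simp
  show "integrable (density lborel std_normal_density) (\<lambda>x::real. x)"
    using i by (subst integrable_density) auto
  have "(\<integral>x. x \<partial>density lborel std_normal_density) = (\<integral>x. std_normal_density x * x \<partial>lborel)"
    by (subst integral_density) auto
  also have "\<dots> = 0" using integral_std_normal_moment_odd[of 0] by simp
  finally show "(\<integral>x. x \<partial>density lborel std_normal_density) = 0" .
qed

lemma std_int_x2: "integrable (density lborel std_normal_density) (\<lambda>x::real. x\<^sup>2)"
    "(\<integral>x. x\<^sup>2 \<partial>density lborel std_normal_density) = 1"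
proof -
  have i: "integrable lborel (\<lambda>x::real. std_normal_density x * x\<^sup>2)"
    using integrable_std_normal_moment[of 2] by simp
  show "integrable (density lborel std_normal_density) (\<lambda>x::real. x\<^sup>2)"
    using i by (subst integrable_density) auto
  have "(\<integral>x. x\<^sup>2 \<partial>density lborel std_normal_density) = (\<integral>x. std_normal_density x * x\<^sup>2 \<partial>lborel)"
    by (subst integral_density) auto
  also have "\<dots> = 1" using integral_std_normal_moment_even[of 1] by simp
  finally show "(\<integral>x. x\<^sup>2 \<partial>density lborel std_normal_density) = 1" .
qed

lemma Bz_int_z:
  assumes "i < n"
  shows "integrable (Bz n) (\<lambda>z. z i)" "(\<integral>z. z i \<partial>Bz n) = 0"
    "integrable (Bz n) (\<lambda>z. (z i)\<^sup>2)" "(\<integral>z. (z i)\<^sup>2 \<partial>Bz n) = 1"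
  using PiM_int_one[of "\<lambda>_. density lborel std_normal_density" "{..<n}" i "\<lambda>x. x"]
    PiM_int_one[of "\<lambda>_. density lborel std_normal_density" "{..<n}" i "\<lambda>x. x\<^sup>2"]
    std_int_x std_int_x2 assms prob_space_normal_density[of 1]
  unfolding Bz_def by auto

lemma pY_pos: "0 < pY \<alpha> M s l n y"
proof -
  interpret prob_space "Aw \<alpha> M l" by (rule prob_space_Aw)
  have nn: "0 \<le> pY \<alpha> M s l n y"
    unfolding pY_def by (intro Bochner_Integration.integral_nonneg) (simp add: phi_nonneg)
  have "pY \<alpha> M s l n y \<noteq> 0"
  proof
    assume "pY \<alpha> M s l n y = 0"
    then have "AE w in Aw \<alpha> M l. phi n (mu s l w) y = 0"
      unfolding pY_def using int_phi_Aw by (subst (asm) integral_nonneg_eq_0_iff_AE) (auto simp: phi_nonneg)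
    then have "AE w in Aw \<alpha> M l. False"
      by (rule eventually_mono) (use phi_pos in \<open>auto simp: less_le\<close>)
    then show False by simp
  qed
  with nn show ?thesis by simp
qed

definition qd :: "(nat \<Rightarrow> real) \<Rightarrow> real \<Rightarrow> nat \<Rightarrow> (nat \<Rightarrow> real) \<Rightarrow> real" where
  "qd c \<sigma> n y = (\<Prod>i<n. normal_density (c i) \<sigma> (y i))"

lemma qd_pos: "0 < \<sigma> \<Longrightarrow> 0 < qd c \<sigma> n y"
  unfolding qd_def by (intro prod_pos normal_density_pos) auto

lemma meas_qd[measurable]: "qd c \<sigma> n \<in> borel_measurable (Lam n)"
  unfolding qd_def[abs_def] normal_density_def by measurable

lemma PiM_normal_density_sigma:
  fixes m :: "nat \<Rightarrow> real"
  assumes sig: "0 < \<sigma>"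
  shows "PiM {..<n} (\<lambda>i. density lborel (normal_density (m i) \<sigma>)) = density (Lam n) (qd m \<sigma> n)"
proof -
  have sfn: "sigma_finite_measure (density lborel (normal_density c \<sigma>))" for c
    using prob_space_imp_sigma_finite[OF prob_space_normal_density[OF sig, of c]] by simp
  interpret N: product_sigma_finite "\<lambda>i. density lborel (normal_density (m i) \<sigma>)"
    using sfn by (rule product_sigma_finite.intro)
  interpret L: product_sigma_finite "\<lambda>_::nat. lborel" by standard
  show ?thesis
  proof (rule N.PiM_eqI[symmetric])
    show "sets (density (Lam n) (qd m \<sigma> n)) = sets (PiM {..<n} (\<lambda>i. density lborel (normal_density (m i) \<sigma>)))"
      unfolding sets_density Lam_def by (intro sets_PiM_cong) simp_all
  next
    fix A assume A: "\<And>i. i \<in> {..<n} \<Longrightarrow> A i \<in> sets (density lborel (normal_density (m i) \<sigma>))"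
    then have A': "\<And>i. i \<in> {..<n} \<Longrightarrow> A i \<in> sets lborel" by simp
    have "PiE {..<n} A \<in> sets (Lam n)"
      unfolding Lam_def using A' by (intro sets_PiM_I_finite) auto
    then have "emeasure (density (Lam n) (qd m \<sigma> n)) (PiE {..<n} A)
       = (\<integral>\<^sup>+ y. ennreal (qd m \<sigma> n y) * indicator (PiE {..<n} A) y \<partial>Lam n)"
      by (subst emeasure_density) auto
    also have "\<dots> = (\<integral>\<^sup>+ y. (\<Prod>i\<in>{..<n}. ennreal (normal_density (m i) \<sigma> (y i)) * indicator (A i) (y i)) \<partial>PiM {..<n} (\<lambda>_. lborel))"
      unfolding Lam_def
    proof (rule nn_integral_cong)
      fix y :: "nat \<Rightarrow> real" assume y: "y \<in> space (PiM {..<n} (\<lambda>_. lborel))"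
      have "indicator (PiE {..<n} A) y = (\<Prod>i\<in>{..<n}. indicator (A i) (y i) :: ennreal)"
        using y by (auto simp: space_PiM indicator_def PiE_iff)
      then show "ennreal (qd m \<sigma> n y) * indicator (PiE {..<n} A) y =
         (\<Prod>i\<in>{..<n}. ennreal (normal_density (m i) \<sigma> (y i)) * indicator (A i) (y i))"
        by (simp add: qd_def prod.distrib prod_ennreal)
    qed
    also have "\<dots> = (\<Prod>i\<in>{..<n}. \<integral>\<^sup>+ t. ennreal (normal_density (m i) \<sigma> t) * indicator (A i) t \<partial>lborel)"
      using A' by (intro L.product_nn_integral_prod) auto
    also have "\<dots> = (\<Prod>i\<in>{..<n}. emeasure (density lborel (normal_density (m i) \<sigma>)) (A i))"
      using A' by (intro prod.cong refl) (simp add: emeasure_density)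
    finally show "emeasure (density (Lam n) (qd m \<sigma> n)) (PiE {..<n} A)
        = (\<Prod>i\<in>{..<n}. emeasure (density lborel (normal_density (m i) \<sigma>)) (A i))" .
  qed simp
qed

lemma qd_int:
  assumes sig: "0 < \<sigma>"
  shows "integrable (Lam n) (qd c \<sigma> n)" "(\<integral>y. qd c \<sigma> n y \<partial>Lam n) = 1"
proof -
  have ps: "prob_space (density (Lam n) (qd c \<sigma> n))"
    unfolding PiM_normal_density_sigma[OF sig, symmetric]
    by (intro prob_space_PiM prob_space_normal_density sig)
  have "(\<integral>\<^sup>+ y. ennreal (qd c \<sigma> n y) \<partial>Lam n) = emeasure (density (Lam n) (qd c \<sigma> n)) (space (Lam n))"
    by (simp add: emeasure_density)
  also have "\<dots> = 1" using prob_space.emeasure_space_1[OF ps] by simp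
  finally have nn: "(\<integral>\<^sup>+ y. ennreal (qd c \<sigma> n y) \<partial>Lam n) = 1" .
  have pos: "\<And>y. 0 \<le> qd c \<sigma> n y" using qd_pos[OF sig] less_imp_le by blast
  show int: "integrable (Lam n) (qd c \<sigma> n)"
    using nn pos by (intro integrableI_nonneg) auto
  have "ennreal (\<integral>y. qd c \<sigma> n y \<partial>Lam n) = 1"
    using nn pos int by (subst nn_integral_eq_integral[symmetric]) auto
  then show "(\<integral>y. qd c \<sigma> n y \<partial>Lam n) = 1" using pos by simp
qed

lemma ln_nd:
  assumes "0 < \<sigma>"
  shows "ln (normal_density c \<sigma> x) = - ln (sqrt (2*pi)) - ln \<sigma> - (x - c)\<^sup>2 / (2 * \<sigma>\<^sup>2)"
proof -
  have sq: "sqrt (2 * pi * \<sigma>\<^sup>2) = sqrt (2*pi) * \<sigma>"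
    using assms by (simp add: real_sqrt_mult)
  have pos: "0 < sqrt (2*pi)" by simp
  have "ln (normal_density c \<sigma> x) = ln (1 / (sqrt (2*pi) * \<sigma>)) + ln (exp (-(x - c)\<^sup>2 / (2 * \<sigma>\<^sup>2)))"
    unfolding normal_density_def sq using assms pos by (subst ln_mult) auto
  also have "\<dots> = - ln (sqrt (2*pi)) - ln \<sigma> - (x - c)\<^sup>2 / (2 * \<sigma>\<^sup>2)"
    using assms pos by (simp add: ln_div ln_mult)
  finally show ?thesis .
qed

lemma ln_ratio:
  fixes \<sigma> t m c :: real
  assumes sig: "0 < \<sigma>"
  shows "ln (std_normal_density t) - ln (normal_density c \<sigma> (m + t)) =
    (1/(2*\<sigma>\<^sup>2) - 1/2) * t\<^sup>2 + 1/(2*\<sigma>\<^sup>2) * (m - c)\<^sup>2 + 1/\<sigma>\<^sup>2 * ((m - c) * t) + ln \<sigma>"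
proof -
  have "ln (std_normal_density t) - ln (normal_density c \<sigma> (m + t)) =
     - t\<^sup>2 / 2 + ln \<sigma> + (m + t - c)\<^sup>2 / (2 * \<sigma>\<^sup>2)"
    using ln_nd[OF sig, of c "m+t"] ln_nd[of 1 0 t] by simp
  also have "\<dots> = (1/(2*\<sigma>\<^sup>2) - 1/2) * t\<^sup>2 + 1/(2*\<sigma>\<^sup>2) * (m - c)\<^sup>2 + 1/\<sigma>\<^sup>2 * ((m - c) * t) + ln \<sigma>"
    using sig by (simp add: field_simps power2_eq_square)
  finally show ?thesis .
qed

theorem lemma1:
  fixes M n l :: nat and \<alpha> P :: real and s :: "nat \<Rightarrow> nat \<Rightarrow> nat \<Rightarrow> real"
  assumes "M \<ge> 1" and "n \<ge> 1"
    and "0 \<le> \<alpha>" and "\<alpha> \<le> 1" and "0 \<le> P"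
    and "\<And>k i. k < l \<Longrightarrow> i < n \<Longrightarrow> s k 0 i = 0"
    and "\<And>k w. k < l \<Longrightarrow> w \<le> M \<Longrightarrow> (1 / real n) * (\<Sum>i<n. (s k w i)\<^sup>2) \<le> P"
  shows "prob_space.mutual_information (mac_space \<alpha> M l n) (exp 1)
           (PiM {..<l*M} (\<lambda>_. count_space UNIV)) (PiM {..<n} (\<lambda>_. borel))
           (mac_X M l) (mac_Y s l n)
         \<le> real n / 2 * ln (1 + \<alpha> * real l * P)"
proof -
  note M1 = assms(1) and n1 = assms(2) and a0 = assms(3) and a1 = assms(4) and P0 = assms(5)
    and s0 = assms(6) and pw = assms(7)
  define K where "K = \<alpha> * real l * P"
  have K0: "0 \<le> K" unfolding K_def using a0 P0 by simp
  define \<sigma> where "\<sigma> = sqrt (1 + K)"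
  have sig: "0 < \<sigma>" unfolding \<sigma>_def using K0 by simp
  have sig2: "\<sigma>\<^sup>2 = 1 + K" unfolding \<sigma>_def using K0 by simp
  define a where "a = 1/(2*\<sigma>\<^sup>2) - 1/2"
  define b where "b = 1/(2*\<sigma>\<^sup>2)"
  define c where "c = 1/\<sigma>\<^sup>2"
  define cc where "cc i = (\<Sum>k<l. Em \<alpha> M s k i)" for i
  let ?Mm = "Aw \<alpha> M l \<Otimes>\<^sub>M Bz n"
  have ddc: "dd \<alpha> M s l w i = mu s l w i - cc i" for w i
    by (simp add: dd_def mu_def cc_def sum_subtractf)

  have MI1: "prob_space.mutual_information (mac_space \<alpha> M l n) (exp 1)
           (PiM {..<l*M} (\<lambda>_. count_space UNIV)) (PiM {..<n} (\<lambda>_. borel))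
           (mac_X M l) (mac_Y s l n) =
        prob_space.mutual_information ?Mm (exp 1) (Sx \<alpha> M l n) (Lam n) (mac_X M l) (mac_Y s l n)"
  proof -
    have d1: "distr ?Mm (PiM {..<l*M} (\<lambda>_. count_space UNIV)) (mac_X M l) = distr ?Mm (Sx \<alpha> M l n) (mac_X M l)"
      by (rule distr_cong) (simp_all add: SX_def)
    have sT: "sets (PiM {..<n} (\<lambda>_. borel)) = sets (Lam n)"
      unfolding Lam_def by (intro sets_PiM_cong) simp_all
    have d2: "distr ?Mm (PiM {..<n} (\<lambda>_. borel)) (mac_Y s l n) = distr ?Mm (Lam n) (mac_Y s l n)"
      by (rule distr_cong) (simp_all add: sT)
    have sP: "sets (PiM {..<l*M} (\<lambda>_. count_space UNIV) \<Otimes>\<^sub>M PiM {..<n} (\<lambda>_. borel)) = sets (Sx \<alpha> M l n \<Otimes>\<^sub>M Lam n)"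
      by (rule sets_pair_measure_cong) (simp_all add: SX_def sT)
    have d3: "distr ?Mm (PiM {..<l*M} (\<lambda>_. count_space UNIV) \<Otimes>\<^sub>M PiM {..<n} (\<lambda>_. borel)) (\<lambda>x. (mac_X M l x, mac_Y s l n x))
        = distr ?Mm (Sx \<alpha> M l n \<Otimes>\<^sub>M Lam n) (\<lambda>x. (mac_X M l x, mac_Y s l n x))"
      by (rule distr_cong) (simp_all add: sP)
    show ?thesis
      unfolding mac_space_eq prob_space.mutual_information_def[OF prob_space_M] d1 d2 d3 ..
  qed

  have dXY: "distributed ?Mm (Sx \<alpha> M l n \<Otimes>\<^sub>M Lam n)
           (\<lambda>\<omega>. (mac_X M l \<omega>, mac_Y s l n \<omega>)) (\<lambda>p. ennreal (Pj s M l n p))"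
    by (rule distributed_XY) (use s0 M1 in auto)
  interpret I: information_space ?Mm "exp 1"
    unfolding information_space_def information_space_axioms_def using prob_space_M by simp

  have MI2: "prob_space.mutual_information ?Mm (exp 1) (Sx \<alpha> M l n) (Lam n) (mac_X M l) (mac_Y s l n)
      = (\<integral>p. Pj s M l n p * log (exp 1) (Pj s M l n p / (1 * pY \<alpha> M s l n (snd p))) \<partial>(Sx \<alpha> M l n \<Otimes>\<^sub>M Lam n))"
    by (rule I.mutual_information_distr[where Px="\<lambda>_. 1" and Py="pY \<alpha> M s l n" and Pxy="Pj s M l n"])
      (auto intro: prob_space_imp_sigma_finite prob_space_Sx sf_Lam distributed_X distributed_X[simplified] distributed_Y
        dXY Pj_nonneg less_imp_le[OF pY_pos])

  define F where "F \<omega> = log (exp 1) (Pj s M l n (mac_X M l \<omega>, mac_Y s l n \<omega>) / (1 * pY \<alpha> M s l n (mac_Y s l n \<omega>)))" for \<omega>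
  have MI3: "(\<integral>p. Pj s M l n p * log (exp 1) (Pj s M l n p / (1 * pY \<alpha> M s l n (snd p))) \<partial>(Sx \<alpha> M l n \<Otimes>\<^sub>M Lam n))
      = integral\<^sup>L ?Mm F"
    unfolding F_def
    using distributed_integral[OF dXY, of "\<lambda>p. log (exp 1) (Pj s M l n p / (1 * pY \<alpha> M s l n (snd p)))"]
    by (simp add: Pj_nonneg)

  define G where "G \<omega> = (\<Sum>i<n. a * (snd \<omega> i)\<^sup>2 + b * (dd \<alpha> M s l (fst \<omega>) i)\<^sup>2
        + c * (dd \<alpha> M s l (fst \<omega>) i * snd \<omega> i) + ln \<sigma>)
      + (qd cc \<sigma> n (mac_Y s l n \<omega>) / pY \<alpha> M s l n (mac_Y s l n \<omega>) - 1)" for \<omega>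

  have pointwise: "F \<omega> \<le> G \<omega>" if w: "\<forall>k<l. fst \<omega> k \<le> M" for \<omega>
  proof -
    define w where "w = fst \<omega>"
    define z where "z = snd \<omega>"
    define y where "y = mac_Y s l n \<omega>"
    have yi: "\<And>i. i < n \<Longrightarrow> y i = mu s l w i + z i"
      by (simp add: y_def mac_Y_eq w_def z_def)
    have wM: "\<forall>k<l. w k \<le> M" using w by (simp add: w_def)
    have phieq: "phi n (nu s M l (Xg M l w)) = phi n (mu s l w)"
      using s0 wM by (intro phi_nu_Xg) auto
    define A0 where "A0 = (\<Prod>i<n. std_normal_density (z i))"
    have PjA: "Pj s M l n (mac_X M l \<omega>, y) = A0"
    proof -
      have "Pj s M l n (mac_X M l \<omega>, y) = phi n (mu s l w) y"
        by (simp add: Pj_def mac_X_eq w_def[symmetric] phieq)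
      also have "\<dots> = A0"
        unfolding phi_def A0_def
      proof (rule prod.cong[OF refl])
        fix i assume "i \<in> {..<n}"
        then show "normal_density (mu s l w i) 1 (y i) = std_normal_density (z i)"
          by (simp add: yi normal_density_def)
      qed
      finally show ?thesis .
    qed
    define p where "p = pY \<alpha> M s l n y"
    define Q where "Q = qd cc \<sigma> n y"
    have p0: "0 < p" unfolding p_def by (rule pY_pos)
    have Q0: "0 < Q" unfolding Q_def using sig by (rule qd_pos)
    have A00: "0 < A0" unfolding A0_def by (intro prod_pos normal_density_pos) auto
    have Qeq: "Q = (\<Prod>i<n. normal_density (cc i) \<sigma> (mu s l w i + z i))"
      unfolding Q_def qd_def by (intro prod.cong refl) (simp add: yi)
    have FA: "F \<omega> = ln A0 - ln p"
      unfolding F_def using PjA A00 p0 by (simp add: y_def[symmetric] p_def[symmetric] log_def ln_div)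
    have "ln A0 - ln Q = (\<Sum>i<n. ln (std_normal_density (z i)) - ln (normal_density (cc i) \<sigma> (mu s l w i + z i)))"
      unfolding A0_def Qeq
      by (subst ln_prod, simp, simp add: normal_density_pos[THEN less_imp_neq, symmetric] sig)+
        (simp add: sum_subtractf)
    also have "\<dots> = (\<Sum>i<n. a * (z i)\<^sup>2 + b * (dd \<alpha> M s l w i)\<^sup>2 + c * (dd \<alpha> M s l w i * z i) + ln \<sigma>)"
      by (intro sum.cong refl) (simp add: ln_ratio[OF sig] ddc a_def b_def c_def)
    finally have e1: "ln A0 - ln Q = (\<Sum>i<n. a * (z i)\<^sup>2 + b * (dd \<alpha> M s l w i)\<^sup>2 + c * (dd \<alpha> M s l w i * z i) + ln \<sigma>)" .
    have e2: "ln Q - ln p \<le> Q / p - 1"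
      using ln_le_minus_one[of "Q / p"] p0 Q0 by (simp add: ln_div)
    have "F \<omega> = (ln A0 - ln Q) + (ln Q - ln p)" using FA by simp
    also have "\<dots> \<le> (\<Sum>i<n. a * (z i)\<^sup>2 + b * (dd \<alpha> M s l w i)\<^sup>2 + c * (dd \<alpha> M s l w i * z i) + ln \<sigma>) + (Q / p - 1)"
      using e1 e2 by simp
    also have "\<dots> = G \<omega>"
      unfolding G_def w_def z_def Q_def p_def y_def ..
    finally show ?thesis .
  qed

  have AEw: "AE \<omega> in ?Mm. \<forall>k<l. fst \<omega> k \<le> M"
  proof (rule AE_distrD[OF measurable_fst])
    show "AE x in distr ?Mm (Aw \<alpha> M l) fst. \<forall>k<l. x k \<le> M"
      by (subst prob_space.distr_pair_fst[OF prob_space_Bz]) (rule AE_Aw_le[OF M1])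
  qed
  have FG: "AE \<omega> in ?Mm. F \<omega> \<le> G \<omega>"
    using AEw by (rule eventually_mono) (rule pointwise)

  have pA: "prob_space (Aw \<alpha> M l)" by (rule prob_space_Aw)
  have pB: "prob_space (Bz n)" by (rule prob_space_Bz)
  have one_A: "integrable (Aw \<alpha> M l) (\<lambda>_. 1::real)" "(\<integral>_. (1::real) \<partial>Aw \<alpha> M l) = 1"
    using pA by (auto simp: prob_space.prob_space prob_space_def intro: finite_measure.integrable_const)
  have mB: "measure (Bz n) (space (Lam n)) = 1" using prob_space.prob_space[OF pB] by simp
  have one_B: "integrable (Bz n) (\<lambda>_. 1::real)" "(\<integral>_. (1::real) \<partial>Bz n) = 1"
    using pB mB by (auto simp: prob_space.prob_space prob_space_def intro: finite_measure.integrable_const)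

  define gi where "gi i \<omega> = a * (snd \<omega> i)\<^sup>2 + b * (dd \<alpha> M s l (fst \<omega>) i)\<^sup>2
        + c * (dd \<alpha> M s l (fst \<omega>) i * snd \<omega> i) + ln \<sigma>" for i \<omega>
  have gi_int: "integrable ?Mm (gi i)"
    and gi_val: "integral\<^sup>L ?Mm (gi i) = a + b * (\<integral>w. (dd \<alpha> M s l w i)\<^sup>2 \<partial>Aw \<alpha> M l) + ln \<sigma>"
    if i: "i < n" for i
  proof -
    note z = Bz_int_z[OF i]
    have i1: "integrable ?Mm (\<lambda>\<omega>. (\<lambda>_. 1::real) (fst \<omega>) * (\<lambda>z. (z i)\<^sup>2) (snd \<omega>))"
      and e1: "(\<integral>\<omega>. (\<lambda>_. 1::real) (fst \<omega>) * (\<lambda>z. (z i)\<^sup>2) (snd \<omega>) \<partial>?Mm) = 1"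
      using pair_prod_int[OF pA pB one_A(1) z(3)] one_A z by auto
    have i2: "integrable ?Mm (\<lambda>\<omega>. (\<lambda>w. (dd \<alpha> M s l w i)\<^sup>2) (fst \<omega>) * (\<lambda>_. 1::real) (snd \<omega>))"
      and e2: "(\<integral>\<omega>. (\<lambda>w. (dd \<alpha> M s l w i)\<^sup>2) (fst \<omega>) * (\<lambda>_. 1::real) (snd \<omega>) \<partial>?Mm) = (\<integral>w. (dd \<alpha> M s l w i)\<^sup>2 \<partial>Aw \<alpha> M l)"
      using pair_prod_int[OF pA pB dd_sq(1)[OF M1] one_B(1)] one_B by auto
    have i3: "integrable ?Mm (\<lambda>\<omega>. (\<lambda>w. dd \<alpha> M s l w i) (fst \<omega>) * (\<lambda>z. z i) (snd \<omega>))"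
      and e3: "(\<integral>\<omega>. (\<lambda>w. dd \<alpha> M s l w i) (fst \<omega>) * (\<lambda>z. z i) (snd \<omega>) \<partial>?Mm) = 0"
      using pair_prod_int[OF pA pB int_dd[OF M1] z(1)] z by auto
    have cM: "integrable ?Mm (\<lambda>_. ln \<sigma>)" "(\<integral>_. ln \<sigma> \<partial>?Mm) = ln \<sigma>"
      using prob_space_M[of \<alpha> M l n]
      by (auto simp: prob_space.prob_space prob_space_def intro: finite_measure.integrable_const)
    show "integrable ?Mm (gi i)"
      unfolding gi_def using i1 i2 i3 cM by simp
    show "integral\<^sup>L ?Mm (gi i) = a + b * (\<integral>w. (dd \<alpha> M s l w i)\<^sup>2 \<partial>Aw \<alpha> M l) + ln \<sigma>"
      unfolding gi_def using i1 i2 i3 cM e1 e2 e3 by simp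
  qed

  define R where "R \<omega> = qd cc \<sigma> n (mac_Y s l n \<omega>) / pY \<alpha> M s l n (mac_Y s l n \<omega>)" for \<omega>
  have qpq: "pY \<alpha> M s l n y * (qd cc \<sigma> n y / pY \<alpha> M s l n y) = qd cc \<sigma> n y" for y
    using pY_pos[of \<alpha> M s l n y] by simp
  have R_int: "integrable ?Mm R"
  proof -
    have "integrable (Lam n) (\<lambda>y. pY \<alpha> M s l n y * (qd cc \<sigma> n y / pY \<alpha> M s l n y))"
      unfolding qpq using qd_int(1)[OF sig] .
    then show ?thesis
      unfolding R_def
      by (subst distributed_integrable[OF distributed_Y, symmetric]) (auto simp: less_imp_le[OF pY_pos])
  qed
  have R_val: "integral\<^sup>L ?Mm R = 1"
  proof -
    have "integral\<^sup>L ?Mm R = (\<integral>y. pY \<alpha> M s l n y * (qd cc \<sigma> n y / pY \<alpha> M s l n y) \<partial>Lam n)"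
      unfolding R_def
      by (subst distributed_integral[OF distributed_Y]) (auto simp: less_imp_le[OF pY_pos])
    also have "\<dots> = 1" unfolding qpq using qd_int(2)[OF sig] .
    finally show ?thesis .
  qed

  have Geq: "G = (\<lambda>\<omega>. (\<Sum>i<n. gi i \<omega>) + (R \<omega> - 1))"
    unfolding G_def gi_def R_def by (intro ext) simp
  have one_M: "integrable ?Mm (\<lambda>_. 1::real)" "(\<integral>_. (1::real) \<partial>?Mm) = 1"
    using prob_space_M[of \<alpha> M l n]
    by (auto simp: prob_space.prob_space prob_space_def intro: finite_measure.integrable_const)
  have Gint: "integrable ?Mm G"
    unfolding Geq using gi_int R_int one_M
    by (intro Bochner_Integration.integrable_add Bochner_Integration.integrable_diff Bochner_Integration.integrable_sum) auto
  have "integral\<^sup>L ?Mm G = (\<Sum>i<n. integral\<^sup>L ?Mm (gi i)) + (integral\<^sup>L ?Mm R - 1)"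
    unfolding Geq using gi_int R_int one_M
    by (subst Bochner_Integration.integral_add) (auto simp: Bochner_Integration.integral_sum)
  also have "\<dots> = (\<Sum>i<n. a + b * (\<integral>w. (dd \<alpha> M s l w i)\<^sup>2 \<partial>Aw \<alpha> M l) + ln \<sigma>)"
    using gi_val R_val by simp
  also have "\<dots> = real n * a + b * (\<Sum>i<n. \<integral>w. (dd \<alpha> M s l w i)\<^sup>2 \<partial>Aw \<alpha> M l) + real n * ln \<sigma>"
    by (simp add: sum.distrib sum_distrib_left)
  also have "\<dots> \<le> real n * a + b * (real n * K) + real n * ln \<sigma>"
  proof -
    have "(\<Sum>i<n. \<integral>w. (dd \<alpha> M s l w i)\<^sup>2 \<partial>Aw \<alpha> M l) \<le> (\<Sum>i<n. \<Sum>k<l. \<integral>v. (s k v i)\<^sup>2 \<partial>measure_pmf (msg_pmf \<alpha> M))"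
      by (intro sum_mono dd_sq(2)[OF M1])
    also have "\<dots> \<le> real n * K"
      unfolding K_def by (rule power_sum_bound[OF M1 n1 a0 a1]) (use s0 pw in auto)
    finally have "(\<Sum>i<n. \<integral>w. (dd \<alpha> M s l w i)\<^sup>2 \<partial>Aw \<alpha> M l) \<le> real n * K" .
    moreover have "0 \<le> b" unfolding b_def by simp
    ultimately show ?thesis by (simp add: mult_left_mono)
  qed
  also have "\<dots> = real n * ln \<sigma>"
  proof -
    have "a + b * K = 0"
      unfolding a_def b_def sig2 using K0 by (simp add: field_simps)
    then have "real n * a + b * (real n * K) = 0"
      by (metis (no_types, opaque_lifting) distrib_left mult.left_commute mult_zero_right)
    then show ?thesis by simp
  qed
  also have "\<dots> = real n / 2 * ln (1 + \<alpha> * real l * P)"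
    unfolding \<sigma>_def K_def using K0[unfolded K_def] by (simp add: ln_sqrt)
  finally have Gval: "integral\<^sup>L ?Mm G \<le> real n / 2 * ln (1 + \<alpha> * real l * P)" .

  have rhs0: "0 \<le> real n / 2 * ln (1 + \<alpha> * real l * P)"
    using K0[unfolded K_def] by simp
  have "integral\<^sup>L ?Mm F \<le> real n / 2 * ln (1 + \<alpha> * real l * P)"
  proof (cases "integrable ?Mm F")
    case True
    then have "integral\<^sup>L ?Mm F \<le> integral\<^sup>L ?Mm G"
      using Gint FG by (rule integral_mono_AE)
    then show ?thesis using Gval by simp
  next
    case False
    then show ?thesis using rhs0 by (simp add: not_integrable_integral_eq)
  qed
  then show ?thesis
    unfolding MI1 MI2 MI3 .
qed

end
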